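(* Let $R$ be an associative ring with a derivation $'$. Suppose $u_n,v_n\in R$ ($n\in\mathbb{Z}$) satisfy $$u_n'=v_{n+1}u_n-u_nv_n,\qquad v_n'=u_nv_n-v_nu_{n-1}\qquad(n\in\mathbb{Z}).$$ Then $a_n:=u_n+v_n$ and $b_n:=v_nu_{n-1}$ satisfy $$a_n'=b_{n+1}-b_n,\qquad b_n'=a_nb_n-b_na_{n-1}\qquad(n\in\mathbb{Z}).$$
   Context: The system for $(u_n,v_n)$ is the non-abelian Volterra lattice $\gamma_n'=\gamma_{n+1}\gamma_n-\gamma_n\gamma_{n-1}$ written with $u_k=\gamma_{2k+1}$, $v_k=\gamma_{2k}$; the system for $(a_n,b_n)$ is equivalent to the non-abelian 1d Toda lattice when $a_n=\theta_n'\theta_n^{-1}$, $b_n=\theta_n\theta_{n-1}^{-1}$. *)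

theory Defs
  imports Main
begin

definition is_derivation :: "('a::ring \<Rightarrow> 'a) \<Rightarrow> bool" where
  "is_derivation D \<longleftrightarrow>
     (\<forall>x y. D (x + y) = D x + D y) \<and> (\<forall>x y. D (x * y) = D x * y + x * D y)"

end

theory Submission
  imports Defs
begin

theorem proposition5p3:
  fixes D :: "'a::ring \<Rightarrow> 'a" and u v a b :: "int \<Rightarrow> 'a"
  assumes "is_derivation D"
    and "\<And>n. D (u n) = v (n + 1) * u n - u n * v n"
    and "\<And>n. D (v n) = u n * v n - v n * u (n - 1)"
    and "\<And>n. a n = u n + v n"
    and "\<And>n. b n = v n * u (n - 1)"
  shows "\<forall>n. D (a n) = b (n + 1) - b n \<and> D (b n) = a n * b n - b n * a (n - 1)"
proof
  fix n :: int
  have add: "\<And>x y. D (x + y) = D x + D y" and mul: "\<And>x y. D (x * y) = D x * y + x * D y"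
    using assms(1) unfolding is_derivation_def by auto
  have 1: "D (a n) = b (n + 1) - b n"
    by (simp add: assms(2-5) add)
  have 2: "D (u (n - 1)) = v n * u (n - 1) - u (n - 1) * v (n - 1)"
    using assms(2)[of "n - 1"] by simp
  have "D (b n) = (u n * v n - v n * u (n - 1)) * u (n - 1) + v n * (v n * u (n - 1) - u (n - 1) * v (n - 1))"
    by (simp add: assms(5) mul assms(3) 2)
  also have "\<dots> = a n * b n - b n * a (n - 1)"
    by (simp add: assms(4,5) algebra_simps)
  finally show "D (a n) = b (n + 1) - b n \<and> D (b n) = a n * b n - b n * a (n - 1)"
    using 1 by simp
qed

end
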